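(* Let $f\in\mathcal B$ be not an extreme point of $\mathcal B$, and let $A_n,B_n$ be its Schur polynomials. Then there exist analytic functions $a,b$ on $\mathbb D$ such that $A_n\to a$ and $B_n\to b$ uniformly on compact subsets of $\mathbb D$ as $n\to\infty$, and $a=bf$. Moreover $A_n^*\to0$ and $B_n^*\to0$ uniformly on compact subsets of $\mathbb D$.
   Context: $\mathbb D=\{|z|<1\}$; $\mathcal B$ is the set of analytic $f$ on $\mathbb D$ with $|f|<1$ on $\mathbb D$. An element $f\in\mathcal B$ is an extreme point of $\mathcal B$ if it is not a proper convex combination $tg+(1-t)h$, $0<t<1$, of two distinct $g,h\in\mathcal B$. (A non-extreme $f$ is not a finite Blaschke product, so the Schur algorithm below never terminates.) For a polynomial $p$ indexed by $n$, $p^*(z)=z^n\overline{p(1/\bar z)}$ (reversal with respect to degree $n$). Schur algorithm: $f_0=f$, $\gamma_n=f_n(0)$, $f_{n+1}(z)=\frac1z\frac{f_n(z)-\gamma_n}{1-\overline{\gamma_n}f_n(z)}$. Schur polynomials: $A_0=\gamma_0$, $B_0=1$, and for $n\ge1$, $A_n=A_{n-1}+z\gamma_nB_{n-1}^*$, $B_n=B_{n-1}+z\gamma_nA_{n-1}^*$. *)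

theory Defs
  imports "HOL-Complex_Analysis.Complex_Analysis" "HOL-Computational_Algebra.Polynomial"
begin

definition schur_class :: "(complex \<Rightarrow> complex) set" where
  "schur_class = {f. f holomorphic_on ball 0 1 \<and> (\<forall>z\<in>ball 0 1. norm (f z) < 1)}"

definition schur_extreme :: "(complex \<Rightarrow> complex) \<Rightarrow> bool" where
  "schur_extreme f \<longleftrightarrow> f \<in> schur_class \<and>
     \<not> (\<exists>g h t. g \<in> schur_class \<and> h \<in> schur_class \<and> (\<exists>z\<in>ball 0 1. g z \<noteq> h z) \<and>
          0 < t \<and> t < 1 \<and>
          (\<forall>z\<in>ball 0 1. f z = complex_of_real t * g z + complex_of_real (1 - t) * h z))"

text \<open>Schur algorithm. The value at 0 of f_{n+1} is the value of the removable
  singularity, i.e. the derivative at 0 of the Moebius-transformed function.\<close>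
primrec schur_iter :: "(complex \<Rightarrow> complex) \<Rightarrow> nat \<Rightarrow> complex \<Rightarrow> complex" where
  "schur_iter f 0 = f"
| "schur_iter f (Suc n) =
     (let g = schur_iter f n;
          m = (\<lambda>w. (g w - g 0) / (1 - cnj (g 0) * g w))
      in (\<lambda>z. if z = 0 then deriv m 0 else m z / z))"

definition schur_param :: "(complex \<Rightarrow> complex) \<Rightarrow> nat \<Rightarrow> complex" where
  "schur_param f n = schur_iter f n 0"

text \<open>Reversal p^*(z) = z^n conj(p(1/conj z)) of a polynomial of degree at most n.\<close>
definition poly_star :: "nat \<Rightarrow> complex poly \<Rightarrow> complex poly" where
  "poly_star n p = (\<Sum>i\<le>n. monom (cnj (coeff p (n - i))) i)"

fun schur_AB :: "(complex \<Rightarrow> complex) \<Rightarrow> nat \<Rightarrow> complex poly \<times> complex poly" where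
  "schur_AB f 0 = ([:schur_param f 0:], 1)"
| "schur_AB f (Suc n) =
     (let A = fst (schur_AB f n); B = snd (schur_AB f n); g = schur_param f (Suc n)
      in (A + smult g (pCons 0 (poly_star n B)), B + smult g (pCons 0 (poly_star n A))))"

definition schur_A :: "(complex \<Rightarrow> complex) \<Rightarrow> nat \<Rightarrow> complex poly" where
  "schur_A f n = fst (schur_AB f n)"

definition schur_B :: "(complex \<Rightarrow> complex) \<Rightarrow> nat \<Rightarrow> complex poly" where
  "schur_B f n = snd (schur_AB f n)"

end

theory Submission
  imports Defs
begin
lemma cs2:
  fixes \<alpha> \<beta> a b :: complex
  shows "norm (\<alpha>*a + \<beta>*b)^2 \<le> (norm \<alpha>^2 + norm \<beta>^2) * (norm a^2 + norm b^2)"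
proof -
  have "norm (\<alpha>*a + \<beta>*b) \<le> norm \<alpha> * norm a + norm \<beta> * norm b"
    by (metis norm_mult norm_triangle_ineq)
  then have "norm (\<alpha>*a + \<beta>*b)^2 \<le> (norm \<alpha> * norm a + norm \<beta> * norm b)^2"
    by (simp add: power_mono)
  also have "\<dots> \<le> (norm \<alpha>^2 + norm \<beta>^2) * (norm a^2 + norm b^2)"
  proof -
    have "0 \<le> (norm \<alpha> * norm b - norm \<beta> * norm a)^2" by simp
    then show ?thesis by (simp add: power2_eq_square algebra_simps)
  qed
  finally show ?thesis .
qed

lemma maxmod_disc:
  fixes k :: "complex \<Rightarrow> complex"
  assumes hol: "k holomorphic_on ball 0 1"
    and bd: "\<And>w. w \<in> ball 0 1 \<Longrightarrow> norm (w^m * k w) \<le> 1"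
    and z: "z \<in> ball 0 1"
  shows "norm (k z) \<le> 1"
proof -
  have le: "norm (k z) \<le> 1 / r^m" if r: "norm z < r" "r < 1" for r :: real
  proof -
    have r0: "r > 0" using r by (meson norm_ge_zero le_less_trans)
    have sub: "cball 0 r \<subseteq> ball (0::complex) 1" using r by auto
    show ?thesis
    proof (rule maximum_modulus_frontier[of k "cball 0 r"])
      show "k holomorphic_on interior (cball 0 r)"
        using hol by (rule holomorphic_on_subset) (use r in auto)
      show "continuous_on (closure (cball 0 r)) k"
        using hol sub by (auto intro: holomorphic_on_imp_continuous_on holomorphic_on_subset)
      show "bounded (cball (0::complex) r)" by simp
      show "z \<in> cball 0 r" using r by auto
      fix w :: complex assume "w \<in> frontier (cball 0 r)"
      then have w: "norm w = r" using r0 by (simp add: frontier_cball)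
      then have "w \<in> ball 0 1" using r by simp
      then have "r^m * norm (k w) \<le> 1" using bd[of w] w by (simp add: norm_mult norm_power)
      then show "norm (k w) \<le> 1 / r^m" using r0 by (simp add: field_simps)
    qed
  qed
  have lim: "((\<lambda>r::real. 1 / r^m) \<longlongrightarrow> 1 / 1^m) (at_left 1)"
    by (intro tendsto_intros) auto
  have ev: "eventually (\<lambda>r. norm z < r \<and> r < 1) (at_left (1::real))"
    using eventually_at_left_real[of "norm z" 1] z by (auto elim!: eventually_mono)
  have "norm (k z) \<le> 1 / 1^m"
    by (rule tendsto_le[OF trivial_limit_at_left_real lim tendsto_const])
       (rule eventually_mono[OF ev], use le in auto)
  then show ?thesis by simp
qed

lemma G_lemma:
  fixes p q :: "complex \<Rightarrow> complex"
  assumes hp: "p holomorphic_on ball 0 1" and hq: "q holomorphic_on ball 0 1"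
    and bd: "\<And>w. w \<in> ball 0 1 \<Longrightarrow> norm (w^m * p w)^2 + norm (q w)^2 \<le> 1"
    and z: "z \<in> ball 0 1"
  shows "norm (p z)^2 + norm (q z)^2 \<le> 1"
proof (cases "norm (p z)^2 + norm (q z)^2 = 0")
  case True then show ?thesis by simp
next
  case False
  define L where "L = sqrt (norm (p z)^2 + norm (q z)^2)"
  have L0: "L > 0" using False unfolding L_def
    by (metis add_nonneg_nonneg real_sqrt_gt_zero zero_le_power2 order_le_less)
  have L2: "L^2 = norm (p z)^2 + norm (q z)^2" unfolding L_def by simp
  define \<alpha> where "\<alpha> = cnj (p z) / of_real L"
  define \<beta> where "\<beta> = cnj (q z) / of_real L"
  have ab: "norm \<alpha>^2 + norm \<beta>^2 = 1"
  proof -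
    have "norm \<alpha>^2 + norm \<beta>^2 = (norm (p z)^2 + norm (q z)^2) / L^2"
      using L0 by (simp add: \<alpha>_def \<beta>_def norm_divide power_divide add_divide_distrib)
    then show ?thesis using L0 L2 False by auto
  qed
  define k where "k = (\<lambda>w. \<alpha> * p w + \<beta> * q w)"
  have hk: "k holomorphic_on ball 0 1" unfolding k_def using hp hq by (intro holomorphic_intros)
  have "norm (k z) \<le> 1"
  proof (rule maxmod_disc[OF hk _ z])
    fix w :: complex assume w: "w \<in> ball 0 1"
    have wm: "norm (w^m) \<le> 1" using w by (simp add: norm_power power_le_one)
    have "norm (w^m * k w)^2 = norm (\<alpha> * (w^m * p w) + \<beta> * (w^m * q w))^2"
      unfolding k_def by (simp add: algebra_simps)
    also have "\<dots> \<le> (norm \<alpha>^2 + norm \<beta>^2) * (norm (w^m * p w)^2 + norm (w^m * q w)^2)"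
      by (rule cs2)
    also have "\<dots> \<le> norm (w^m * p w)^2 + norm (q w)^2"
    proof -
      have "norm (w^m * q w) \<le> norm (q w)" using wm
        by (simp add: norm_mult mult_left_le_one_le)
      then have "norm (w^m * q w)^2 \<le> norm (q w)^2" by (simp add: power_mono)
      then show ?thesis using ab by simp
    qed
    also have "\<dots> \<le> 1" using bd[OF w] .
    finally have "norm (w^m * k w)^2 \<le> 1^2" by simp
    then show "norm (w^m * k w) \<le> 1" by (rule power2_le_imp_le) simp
  qed
  moreover have "k z = of_real L"
  proof -
    have "k z = (p z * cnj (p z) + q z * cnj (q z)) / of_real L"
      unfolding k_def \<alpha>_def \<beta>_def by (simp add: field_simps add_divide_distrib)
    also have "p z * cnj (p z) + q z * cnj (q z) = of_real (L^2)"
      using L2 by (simp only: complex_norm_square[symmetric] of_real_add)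
    finally show ?thesis using L0 by (simp add: power2_eq_square)
  qed
  ultimately have "L \<le> 1" using L0 by simp
  then have "L^2 \<le> 1" using L0 by (simp add: power_le_one)
  then show ?thesis using L2 by simp
qed

lemma alg_norm_id:
  fixes h c :: complex
  shows "norm (h - c)^2 + (1 - norm h^2) * (1 - norm c^2) = norm (1 - cnj c * h)^2"
proof -
  have "complex_of_real (norm (h - c)^2 + (1 - norm h^2) * (1 - norm c^2)) =
        complex_of_real (norm (1 - cnj c * h)^2)"
    by (simp only: of_real_add of_real_mult of_real_diff of_real_1 complex_norm_square)
       (simp add: algebra_simps)
  then show ?thesis using of_real_eq_iff by blast
qed

lemma alg_moeb:
  fixes h c :: complex
  assumes d: "1 - cnj c * h \<noteq> 0"
  defines "m \<equiv> (h - c) / (1 - cnj c * h)"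
  shows "1 + cnj c * m = of_real (1 - norm c^2) / (1 - cnj c * h)"
    and "h * (1 + cnj c * m) = c + m"
proof -
  have nc: "complex_of_real (norm c^2) = c * cnj c" by (rule complex_norm_square)
  show "1 + cnj c * m = of_real (1 - norm c^2) / (1 - cnj c * h)"
    using d unfolding m_def by (simp add: field_simps nc power2_eq_square[symmetric] complex_norm_square[symmetric])
  show "h * (1 + cnj c * m) = c + m"
    using d unfolding m_def by (simp add: field_simps)
qed

lemma schur_step:
  fixes h :: "complex \<Rightarrow> complex"
  assumes hol: "h holomorphic_on ball 0 1" and lt: "\<forall>z\<in>ball 0 1. norm (h z) < 1"
  defines "c \<equiv> h 0"
  defines "m \<equiv> (\<lambda>w. (h w - c) / (1 - cnj c * h w))"
  defines "h' \<equiv> (\<lambda>z. if z = 0 then deriv m 0 else m z / z)"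
  shows "h' holomorphic_on ball 0 1" "\<forall>z\<in>ball 0 1. z * h' z = m z"
    "\<forall>z\<in>ball 0 1. 1 - cnj c * h z \<noteq> 0" "norm c < 1"
proof -
  show c1: "norm c < 1" using lt unfolding c_def by simp
  show nz: "\<forall>z\<in>ball 0 1. 1 - cnj c * h z \<noteq> 0"
  proof
    fix z :: complex assume "z \<in> ball 0 1"
    then have a: "norm (h z) < 1" using lt by simp
    have "norm c * norm (h z) \<le> norm c" using a mult_left_le_one_le[of "norm c" "norm (h z)"] by (simp add: mult.commute)
    then have "norm (cnj c * h z) < 1" using c1 by (simp add: norm_mult)
    then show "1 - cnj c * h z \<noteq> 0" by auto
  qed
  have hm: "m holomorphic_on ball 0 1" unfolding m_def
    using nz hol by (intro holomorphic_intros) auto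
  have m0: "m 0 = 0" unfolding m_def c_def by simp
  have "(\<lambda>z. if z = 0 then deriv m 0 else (m z - m 0) / (z - 0)) holomorphic_on ball 0 1"
    by (rule pole_lemma[OF hm]) simp
  moreover have "(\<lambda>z. if z = 0 then deriv m 0 else (m z - m 0) / (z - 0)) = h'"
    unfolding h'_def using m0 by (auto simp: fun_eq_iff)
  ultimately show "h' holomorphic_on ball 0 1" by simp
  show "\<forall>z\<in>ball 0 1. z * h' z = m z" unfolding h'_def using m0 by auto
qed

lemma schur_iter_Suc_eq:
  "schur_iter f (Suc n) = (\<lambda>z. if z = 0 then deriv (\<lambda>w. (schur_iter f n w - schur_iter f n 0) / (1 - cnj (schur_iter f n 0) * schur_iter f n w)) 0
      else ((schur_iter f n z - schur_iter f n 0) / (1 - cnj (schur_iter f n 0) * schur_iter f n z)) / z)"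
  by (simp add: Let_def)

definition Ep :: "(complex \<Rightarrow> complex) \<Rightarrow> nat \<Rightarrow> complex \<Rightarrow> complex" where
  "Ep f n z = (\<Prod>k<n. 1 + cnj (schur_param f k) * z * schur_iter f (Suc k) z)"

definition Pp :: "(complex \<Rightarrow> complex) \<Rightarrow> nat \<Rightarrow> real" where
  "Pp f n = (\<Prod>k<n. 1 - norm (schur_param f k)^2)"

lemma schur_inv:
  fixes f \<phi> :: "complex \<Rightarrow> complex"
  assumes hf: "f holomorphic_on ball 0 1" and lf: "\<forall>z\<in>ball 0 1. norm (f z) < 1"
    and h\<phi>: "\<phi> holomorphic_on ball 0 1" and \<phi>0: "\<phi> 0 \<noteq> 0"
    and b\<phi>: "\<forall>z\<in>ball 0 1. norm (f z)^2 + norm (\<phi> z)^2 \<le> 1"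
  shows "schur_iter f n holomorphic_on ball 0 1 \<and> (\<forall>z\<in>ball 0 1. norm (schur_iter f n z) < 1)
     \<and> Ep f n holomorphic_on ball 0 1 \<and> Pp f n > 0
     \<and> (\<forall>z\<in>ball 0 1. norm (schur_iter f n z)^2 + norm (\<phi> z * Ep f n z)^2 / Pp f n \<le> 1)"
proof (induction n)
  case 0
  then show ?case using hf lf b\<phi> by (simp add: Ep_def Pp_def)
next
  case (Suc n)
  define h where "h = schur_iter f n"
  define c where "c = h 0"
  define m where "m = (\<lambda>w. (h w - c) / (1 - cnj c * h w))"
  define h' where "h' = (\<lambda>z. if z = 0 then deriv m 0 else m z / z)"
  have hh: "h holomorphic_on ball 0 1" and lh: "\<forall>z\<in>ball 0 1. norm (h z) < 1"
    and hE: "Ep f n holomorphic_on ball 0 1" and P0: "Pp f n > 0"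
    and bd: "\<forall>z\<in>ball 0 1. norm (h z)^2 + norm (\<phi> z * Ep f n z)^2 / Pp f n \<le> 1"
    using Suc.IH unfolding h_def by auto
  have st1: "h' holomorphic_on ball 0 1"
    using schur_step(1)[OF hh lh] unfolding h'_def m_def c_def .
  have st2: "\<forall>z\<in>ball 0 1. z * h' z = m z"
    using schur_step(2)[OF hh lh] unfolding h'_def m_def c_def .
  have st3: "\<forall>z\<in>ball 0 1. 1 - cnj c * h z \<noteq> 0"
    using schur_step(3)[OF hh lh] unfolding c_def .
  have st4: "norm c < 1"
    using schur_step(4)[OF hh lh] unfolding c_def .
  note st = st1 st2 st3 st4
  have h'eq: "schur_iter f (Suc n) = h'"
    unfolding h'_def m_def c_def h_def by (simp add: Let_def)
  have cpar: "schur_param f n = c" unfolding schur_param_def c_def h_def by simp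
  have c1: "norm c < 1" using st by simp
  have c2: "norm c ^2 < 1" using c1 by (simp add: power_less_one_iff abs_less_iff)
  have PS: "Pp f (Suc n) = Pp f n * (1 - norm c^2)" unfolding Pp_def using cpar by simp
  have PS0: "Pp f (Suc n) > 0" using PS P0 c2 by simp
  have ES: "Ep f (Suc n) z = Ep f n z * (1 + cnj c * (z * h' z))" for z
    unfolding Ep_def using cpar h'eq by (simp add: mult.assoc)
  have hh': "h' holomorphic_on ball 0 1" using st by simp
  have hES: "Ep f (Suc n) holomorphic_on ball 0 1"
  proof -
    have "(\<lambda>z. Ep f n z * (1 + cnj c * (z * h' z))) holomorphic_on ball 0 1"
      using hE hh' by (intro holomorphic_intros)
    moreover have "Ep f (Suc n) = (\<lambda>z. Ep f n z * (1 + cnj c * (z * h' z)))"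
      using ES by (rule ext)
    ultimately show ?thesis by simp
  qed
  define q where "q = (\<lambda>z. \<phi> z * Ep f (Suc n) z / of_real (sqrt (Pp f (Suc n))))"
  have hq: "q holomorphic_on ball 0 1" unfolding q_def using h\<phi> hES PS0
    by (intro holomorphic_intros) auto
  have nq: "norm (q z)^2 = norm (\<phi> z * Ep f (Suc n) z)^2 / Pp f (Suc n)" for z
    unfolding q_def using PS0 by (simp add: norm_divide power_divide)
  have bound1: "norm (w^1 * h' w)^2 + norm (q w)^2 \<le> 1" if w: "w \<in> ball 0 1" for w
  proof -
    define H where "H = h w"
    define D where "D = 1 - cnj c * H"
    have D0: "D \<noteq> 0" using st w unfolding D_def H_def by auto
    have tm: "w * h' w = (H - c) / D" using st w unfolding D_def H_def m_def by auto
    have om: "1 + cnj c * (w * h' w) = of_real (1 - norm c^2) / D"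
      using alg_moeb(1)[OF D0[unfolded D_def]] tm unfolding D_def by simp
    define X where "X = norm (\<phi> w * Ep f n w)^2"
    have "norm (h w)^2 + X / Pp f n \<le> 1" using bd w unfolding X_def by auto
    then have X: "X / Pp f n \<le> 1 - norm H^2" unfolding H_def by linarith
    have nD: "norm D > 0" using D0 by simp
    define a where "a = 1 - norm c^2"
    have a0: "a > 0" using c2 unfolding a_def by simp
    have n1: "norm (1 + cnj c * (w * h' w)) = a / norm D"
      using om a0 unfolding a_def[symmetric] by (simp add: norm_divide)
    have "norm (\<phi> w * Ep f (Suc n) w) = norm (\<phi> w * Ep f n w) * (a / norm D)"
      unfolding ES norm_mult n1 by simp
    then have "norm (\<phi> w * Ep f (Suc n) w)^2 = X * (a / norm D)^2"
      unfolding X_def by (metis power_mult_distrib)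
    then have "norm (q w)^2 = X * (a / norm D)^2 / (Pp f n * a)"
      using nq PS unfolding a_def by simp
    also have "\<dots> = (X / Pp f n) * a / norm D^2"
      using a0 P0 nD by (simp add: power2_eq_square)
    also have "\<dots> \<le> (1 - norm H^2) * a / norm D^2"
      using X a0 nD by (intro divide_right_mono mult_right_mono) auto
    finally have qle: "norm (q w)^2 \<le> (1 - norm H^2) * (1 - norm c^2) / norm D^2" unfolding a_def .
    have "norm (w^1 * h' w)^2 = norm (H - c)^2 / norm D^2"
      using tm by (simp add: norm_divide power_divide)
    then have "norm (w^1 * h' w)^2 + norm (q w)^2 \<le>
        (norm (H - c)^2 + (1 - norm H^2) * (1 - norm c^2)) / norm D^2"
      using qle by (simp add: add_divide_distrib)
    also have "\<dots> = 1" using alg_norm_id[of H c] nD unfolding D_def by simp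
    finally show ?thesis .
  qed
  have bound2: "norm (h' z)^2 + norm (q z)^2 \<le> 1" if "z \<in> ball 0 1" for z
    by (rule G_lemma[OF hh' hq bound1 that])
  have E0: "Ep f (Suc n) 0 = 1" unfolding Ep_def by simp
  have lt1: "norm (h' z) < 1" if z: "z \<in> ball 0 1" for z
  proof (rule ccontr)
    assume "\<not> norm (h' z) < 1"
    then have ge: "norm (h' z) \<ge> 1" by simp
    have le1: "norm (h' w) \<le> 1" if "w \<in> ball 0 1" for w
    proof -
      have "norm (h' w)^2 \<le> 1" using bound2[OF that] zero_le_power2[of "norm (q w)"] by linarith
      then show ?thesis using power2_le_imp_le[of "norm (h' w)" 1] by simp
    qed
    have "h' constant_on ball 0 1"
      by (rule maximum_modulus_principle[OF hh' _ _ _ _ z]) (use le1 ge in \<open>auto intro: order_trans\<close>)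
    then have "h' 0 = h' z" using z unfolding constant_on_def by force
    then have "norm (h' 0) \<ge> 1" using ge by simp
    then have "norm (h' 0)^2 \<ge> 1" by (simp add: one_le_power)
    moreover have "norm (h' 0)^2 + norm (q 0)^2 \<le> 1" using bound2[of 0] by simp
    ultimately have "norm (q 0)^2 \<le> 0" by linarith
    then have "norm (q 0) = 0" by (simp add: power2_eq_square mult_le_0_iff)
    then have "q 0 = 0" by simp
    then show False unfolding q_def using E0 \<phi>0 PS0 by simp
  qed
  have "\<forall>z\<in>ball 0 1. norm (h' z)^2 + norm (\<phi> z * Ep f (Suc n) z)^2 / Pp f (Suc n) \<le> 1"
    using bound2 nq by simp
  then show ?case
    unfolding h'eq using hh' lt1 hES PS0 by blast
qed

lemma coeff_poly_star:
  "coeff (poly_star n p) i = (if i \<le> n then cnj (coeff p (n - i)) else 0)"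
  unfolding poly_star_def by (simp add: coeff_sum coeff_monom)

lemma degree_poly_star: "degree (poly_star n p) \<le> n"
  by (rule degree_le) (simp add: coeff_poly_star)

lemma poly_star_add: "poly_star n (p + q) = poly_star n p + poly_star n q"
  by (rule poly_eqI) (simp add: coeff_poly_star)

lemma poly_star_smult: "poly_star n (smult c p) = smult (cnj c) (poly_star n p)"
  by (rule poly_eqI) (simp add: coeff_poly_star)

lemma poly_star_pCons0: "poly_star (Suc n) (pCons 0 q) = poly_star n q"
  by (rule poly_eqI) (auto simp: coeff_poly_star coeff_pCons Suc_diff_le split: nat.split)

lemma poly_star_shift:
  assumes "degree p \<le> n"
  shows "poly_star (Suc n) p = pCons 0 (poly_star n p)"
proof (rule poly_eqI)
  fix i
  show "coeff (poly_star (Suc n) p) i = coeff (pCons 0 (poly_star n p)) i"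
  proof (cases i)
    case 0
    then show ?thesis using assms by (simp add: coeff_poly_star coeff_eq_0)
  next
    case (Suc j)
    then show ?thesis by (simp add: coeff_poly_star)
  qed
qed

lemma poly_star_star:
  assumes "degree p \<le> n"
  shows "poly_star n (poly_star n p) = p"
proof (rule poly_eqI)
  fix i
  show "coeff (poly_star n (poly_star n p)) i = coeff p i"
    using assms by (cases "i \<le> n") (auto simp: coeff_poly_star coeff_eq_0)
qed

lemma schur_AB_Suc:
  "schur_A f (Suc n) = schur_A f n + smult (schur_param f (Suc n)) (pCons 0 (poly_star n (schur_B f n)))"
  "schur_B f (Suc n) = schur_B f n + smult (schur_param f (Suc n)) (pCons 0 (poly_star n (schur_A f n)))"
  by (simp_all add: schur_A_def schur_B_def Let_def)

lemma schur_AB_0: "schur_A f 0 = [:schur_param f 0:]" "schur_B f 0 = 1"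
  by (simp_all add: schur_A_def schur_B_def)

lemma degree_schur_AB: "degree (schur_A f n) \<le> n \<and> degree (schur_B f n) \<le> n"
proof (induction n)
  case 0
  then show ?case by (simp add: schur_AB_0)
next
  case (Suc n)
  have d1: "degree (smult g (pCons 0 (poly_star n p))) \<le> Suc n" for g p
    by (rule order.trans[OF degree_smult_le]) (metis degree_pCons_le degree_poly_star Suc_le_mono order.trans)
  have "degree (schur_A f (Suc n)) \<le> Suc n"
    unfolding schur_AB_Suc using Suc d1 by (intro degree_add_le) auto
  moreover have "degree (schur_B f (Suc n)) \<le> Suc n"
    unfolding schur_AB_Suc using Suc d1 by (intro degree_add_le) auto
  ultimately show ?case ..
qed

lemma star_schur_Suc:
  "poly_star (Suc n) (schur_A f (Suc n)) =
     pCons 0 (poly_star n (schur_A f n)) + smult (cnj (schur_param f (Suc n))) (schur_B f n)"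
  "poly_star (Suc n) (schur_B f (Suc n)) =
     pCons 0 (poly_star n (schur_B f n)) + smult (cnj (schur_param f (Suc n))) (schur_A f n)"
  using degree_schur_AB[of f n]
  by (simp_all add: schur_AB_Suc poly_star_add poly_star_smult poly_star_pCons0 poly_star_shift poly_star_star)

lemma eval_rec:
  fixes f :: "complex \<Rightarrow> complex"
  shows "poly (schur_B f (Suc n)) z = poly (schur_B f n) z + schur_param f (Suc n) * z * poly (poly_star n (schur_A f n)) z"
    "poly (poly_star (Suc n) (schur_A f (Suc n))) z = cnj (schur_param f (Suc n)) * poly (schur_B f n) z + z * poly (poly_star n (schur_A f n)) z"
    "poly (schur_A f (Suc n)) z = poly (schur_A f n) z + schur_param f (Suc n) * z * poly (poly_star n (schur_B f n)) z"
    "poly (poly_star (Suc n) (schur_B f (Suc n))) z = cnj (schur_param f (Suc n)) * poly (schur_A f n) z + z * poly (poly_star n (schur_B f n)) z"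
  by (simp add: schur_AB_Suc algebra_simps, simp only: star_schur_Suc, simp add: algebra_simps,
      simp add: schur_AB_Suc algebra_simps, simp only: star_schur_Suc, simp add: algebra_simps)

lemma eval_0:
  "poly (schur_A f 0) z = schur_param f 0" "poly (schur_B f 0) z = 1"
  "poly (poly_star 0 (schur_A f 0)) z = cnj (schur_param f 0)" "poly (poly_star 0 (schur_B f 0)) z = 1"
  by (simp_all add: schur_AB_0 poly_star_def poly_monom)

lemma schur_R:
  assumes hol: "schur_iter f k holomorphic_on ball 0 1"
    and lt: "\<forall>z\<in>ball 0 1. norm (schur_iter f k z) < 1" and z: "z \<in> ball 0 1"
  shows "schur_iter f k z * (1 + cnj (schur_param f k) * (z * schur_iter f (Suc k) z)) =
         schur_param f k + z * schur_iter f (Suc k) z"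
proof -
  define h where "h = schur_iter f k"
  define c where "c = h 0"
  define m where "m = (\<lambda>w. (h w - c) / (1 - cnj c * h w))"
  have hh: "h holomorphic_on ball 0 1" "\<forall>z\<in>ball 0 1. norm (h z) < 1" using hol lt h_def by auto
  have h'eq: "schur_iter f (Suc k) = (\<lambda>z. if z = 0 then deriv m 0 else m z / z)"
    unfolding m_def c_def h_def by (simp add: Let_def)
  have s2: "z * schur_iter f (Suc k) z = m z"
    using schur_step(2)[OF hh] z unfolding h'eq m_def c_def by auto
  have s3: "1 - cnj c * h z \<noteq> 0"
    using schur_step(3)[OF hh] z unfolding c_def by auto
  have cp: "schur_param f k = c" unfolding schur_param_def c_def h_def by simp
  show ?thesis
    unfolding s2 cp h_def[symmetric] using alg_moeb(2)[OF s3] unfolding m_def by simp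
qed

lemma schur_DN:
  fixes f :: "complex \<Rightarrow> complex"
  assumes inv: "\<And>k. schur_iter f k holomorphic_on ball 0 1 \<and> (\<forall>z\<in>ball 0 1. norm (schur_iter f k z) < 1)"
    and z: "z \<in> ball 0 1"
  shows "poly (schur_B f n) z + z * poly (poly_star n (schur_A f n)) z * schur_iter f (Suc n) z = Ep f (Suc n) z
       \<and> poly (schur_A f n) z + z * poly (poly_star n (schur_B f n)) z * schur_iter f (Suc n) z = f z * Ep f (Suc n) z"
proof (induction n)
  case 0
  have R: "schur_iter f 0 z * (1 + cnj (schur_param f 0) * (z * schur_iter f (Suc 0) z)) =
         schur_param f 0 + z * schur_iter f (Suc 0) z"
    using schur_R[of f 0] inv z by blast
  show ?case using R by (simp add: eval_0 Ep_def algebra_simps)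
next
  case (Suc n)
  define g where "g = schur_param f (Suc n)"
  define u where "u = schur_iter f (Suc n) z"
  define v where "v = schur_iter f (Suc (Suc n)) z"
  define b where "b = poly (schur_B f n) z"
  define a where "a = poly (schur_A f n) z"
  define a' where "a' = poly (poly_star n (schur_A f n)) z"
  define b' where "b' = poly (poly_star n (schur_B f n)) z"
  have R: "u * (1 + cnj g * (z * v)) = g + z * v"
    unfolding u_def v_def g_def using schur_R[of f "Suc n"] inv z by blast
  have ES: "Ep f (Suc (Suc n)) z = Ep f (Suc n) z * (1 + cnj g * (z * v))"
    unfolding Ep_def g_def v_def by (simp add: mult.assoc)
  have IH1: "b + z * a' * u = Ep f (Suc n) z" and IH2: "a + z * b' * u = f z * Ep f (Suc n) z"
    using Suc.IH unfolding a_def b_def a'_def b'_def u_def by auto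
  have "poly (schur_B f (Suc n)) z + z * poly (poly_star (Suc n) (schur_A f (Suc n))) z * v
      = b * (1 + cnj g * (z * v)) + z * a' * (g + z * v)"
    unfolding eval_rec g_def[symmetric] a_def[symmetric] b_def[symmetric] a'_def[symmetric]
    by (simp add: algebra_simps)
  also have "\<dots> = b * (1 + cnj g * (z * v)) + z * a' * (u * (1 + cnj g * (z * v)))"
    using R by simp
  also have "\<dots> = (b + z * a' * u) * (1 + cnj g * (z * v))"
    by (simp add: algebra_simps)
  finally have 1: "poly (schur_B f (Suc n)) z + z * poly (poly_star (Suc n) (schur_A f (Suc n))) z * v
      = Ep f (Suc (Suc n)) z" using IH1 ES by simp
  have "poly (schur_A f (Suc n)) z + z * poly (poly_star (Suc n) (schur_B f (Suc n))) z * v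
      = a * (1 + cnj g * (z * v)) + z * b' * (g + z * v)"
    unfolding eval_rec g_def[symmetric] a_def[symmetric] b_def[symmetric] b'_def[symmetric]
    by (simp add: algebra_simps)
  also have "\<dots> = a * (1 + cnj g * (z * v)) + z * b' * (u * (1 + cnj g * (z * v)))"
    using R by simp
  also have "\<dots> = (a + z * b' * u) * (1 + cnj g * (z * v))"
    by (simp add: algebra_simps)
  finally have 2: "poly (schur_A f (Suc n)) z + z * poly (poly_star (Suc n) (schur_B f (Suc n))) z * v
      = f z * Ep f (Suc (Suc n)) z" using IH2 ES by simp
  show ?case using 1 2 unfolding v_def by simp
qed

lemma J_alg:
  fixes x y g w :: complex
  shows "norm (x + g * w * y)^2 - norm (cnj g * x + w * y)^2 = (1 - norm g^2) * (norm x^2 - norm w^2 * norm y^2)"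
proof -
  have "complex_of_real (norm (x + g * w * y)^2 - norm (cnj g * x + w * y)^2) =
        complex_of_real ((1 - norm g^2) * (norm x^2 - norm w^2 * norm y^2))"
    by (simp only: of_real_add of_real_mult of_real_diff of_real_1 complex_norm_square)
       (simp add: algebra_simps)
  then show ?thesis using of_real_eq_iff by blast
qed

lemma J_id:
  fixes x y g :: "nat \<Rightarrow> complex" and w :: complex
  assumes rx: "\<And>n. x (Suc n) = x n + g (Suc n) * w * y n"
    and ry: "\<And>n. y (Suc n) = cnj (g (Suc n)) * x n + w * y n"
    and g1: "\<And>n. norm (g n) < 1"
  defines "Q \<equiv> (\<lambda>n. \<Prod>k<n. 1 - norm (g (Suc k))^2)"
  shows "norm (x n)^2 - norm (y n)^2 = Q n * ((norm (x 0)^2 - norm (y 0)^2) + (1 - norm w^2) * (\<Sum>k<n. norm (y k)^2 / Q k))"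
proof (induction n)
  case 0
  then show ?case by (simp add: Q_def)
next
  case (Suc n)
  have gk: "1 - norm (g k)^2 > 0" for k
    using g1[of k] by (simp add: power_less_one_iff abs_less_iff)
  have Qp: "Q n > 0" unfolding Q_def using gk by (intro prod_pos) auto
  have QS: "Q (Suc n) = (1 - norm (g (Suc n))^2) * Q n" unfolding Q_def by simp
  have "norm (x (Suc n))^2 - norm (y (Suc n))^2 = (1 - norm (g (Suc n))^2) * (norm (x n)^2 - norm w^2 * norm (y n)^2)"
    unfolding rx ry by (rule J_alg)
  also have "norm (x n)^2 - norm w^2 * norm (y n)^2 = (norm (x n)^2 - norm (y n)^2) + (1 - norm w^2) * norm (y n)^2"
    by (simp add: algebra_simps)
  also have "\<dots> = Q n * ((norm (x 0)^2 - norm (y 0)^2) + (1 - norm w^2) * (\<Sum>k<Suc n. norm (y k)^2 / Q k))"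
    unfolding Suc.IH using Qp by (simp add: field_simps)
  finally show ?case unfolding QS by (simp add: mult.assoc)
qed

lemma conv_lt:
  fixes a b :: complex and l :: real
  assumes "norm a < 1" "norm b < 1" "0 \<le> l" "l \<le> 1"
  shows "norm (of_real (1 - l) * a + of_real l * b) < 1"
proof -
  have "norm (of_real (1 - l) * a + of_real l * b) \<le> (1 - l) * norm a + l * norm b"
  proof -
    have "norm (of_real (1 - l) * a + of_real l * b) \<le> norm (of_real (1 - l) * a) + norm (of_real l * b)"
      by (rule norm_triangle_ineq)
    also have "\<dots> = (1 - l) * norm a + l * norm b"
      by (simp only: norm_mult norm_of_real) (use assms in simp)
    finally show ?thesis .
  qed
  also have "\<dots> < 1" using assms by (intro convex_bound_lt) auto
  finally show ?thesis .
qed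

lemma parallelogram_c:
  fixes a b :: complex
  shows "norm (a + b)^2 + norm (a - b)^2 = 2 * (norm a^2 + norm b^2)"
proof -
  have "complex_of_real (norm (a + b)^2 + norm (a - b)^2) = complex_of_real (2 * (norm a^2 + norm b^2))"
    by (simp only: of_real_add of_real_mult of_real_diff of_real_1 of_real_numeral complex_norm_square)
       (simp add: algebra_simps)
  then show ?thesis using of_real_eq_iff by blast
qed

lemma aux2: "(A::real) < 1 \<Longrightarrow> B < 1 \<Longrightarrow> A + B = 2 * C \<Longrightarrow> C \<le> 1" by linarith

lemma nonext_psi:
  assumes fS: "f \<in> schur_class" and ne: "\<not> schur_extreme f"
  shows "\<exists>\<psi>. \<psi> holomorphic_on ball 0 1 \<and> (\<exists>z\<in>ball 0 1. \<psi> z \<noteq> 0) \<and>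
           (\<forall>z\<in>ball 0 1. norm (f z)^2 + norm (\<psi> z)^2 \<le> 1)"
proof -
  obtain g h t where g: "g \<in> schur_class" and h: "h \<in> schur_class"
    and z0: "\<exists>z\<in>ball 0 1. g z \<noteq> h z" and t: "0 < t" "t < 1"
    and fe: "\<forall>z\<in>ball 0 1. f z = complex_of_real t * g z + complex_of_real (1 - t) * h z"
    using fS ne unfolding schur_extreme_def by blast
  define s where "s = min t (1 - t)"
  have s: "0 < s" "s \<le> t" "s \<le> 1 - t" using t unfolding s_def by auto
  define \<psi> where "\<psi> = (\<lambda>z. of_real s * (g z - h z))"
  have hol: "\<psi> holomorphic_on ball 0 1" unfolding \<psi>_def using g h
    by (intro holomorphic_intros) (auto simp: schur_class_def)
  have nz: "\<exists>z\<in>ball 0 1. \<psi> z \<noteq> 0" using z0 s unfolding \<psi>_def by auto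
  have bd: "norm (f z)^2 + norm (\<psi> z)^2 \<le> 1" if z: "z \<in> ball 0 1" for z
  proof -
    have nf: "norm (f z) < 1" and ng: "norm (g z) < 1" and nh: "norm (h z) < 1"
      using fS g h z by (auto simp: schur_class_def)
    define l where "l = s / (1 - t)"
    define k where "k = s / t"
    have l: "0 \<le> l" "l \<le> 1" using s t unfolding l_def by auto
    have k: "0 \<le> k" "k \<le> 1" using s t unfolding k_def by auto
    have fz: "f z = of_real t * g z + of_real (1 - t) * h z" using fe z by auto
    have e1: "f z + \<psi> z = of_real (1 - l) * f z + of_real l * g z"
    proof -
      have "of_real l * (g z - f z) = \<psi> z"
        unfolding fz \<psi>_def l_def using t by (simp add: field_simps)
      then show ?thesis by (simp add: algebra_simps)
    qed
    have e2: "f z - \<psi> z = of_real (1 - k) * f z + of_real k * h z"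
    proof -
      have "of_real k * (h z - f z) = - \<psi> z"
        unfolding fz \<psi>_def k_def using t by (simp add: field_simps)
      then show ?thesis by (simp add: algebra_simps)
    qed
    have p1: "norm (f z + \<psi> z) < 1" unfolding e1 by (rule conv_lt[OF nf ng l])
    have p2: "norm (f z - \<psi> z) < 1" unfolding e2 by (rule conv_lt[OF nf nh k])
    have "norm (f z + \<psi> z)^2 < 1" using p1 by (simp add: power_less_one_iff abs_less_iff)
    moreover have "norm (f z - \<psi> z)^2 < 1" using p2 by (simp add: power_less_one_iff abs_less_iff)
    ultimately show ?thesis using parallelogram_c[of "f z" "\<psi> z"] by (rule aux2)
  qed
  show ?thesis using hol nz bd by blast
qed

lemma factor_phi:
  fixes f \<psi> :: "complex \<Rightarrow> complex"
  assumes hf: "f holomorphic_on ball 0 1"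
    and hol: "\<psi> holomorphic_on ball 0 1" and nz: "\<exists>z\<in>ball 0 1. \<psi> z \<noteq> 0"
    and bd: "\<forall>z\<in>ball 0 1. norm (f z)^2 + norm (\<psi> z)^2 \<le> 1"
  shows "\<exists>\<phi>. \<phi> holomorphic_on ball 0 1 \<and> \<phi> 0 \<noteq> 0 \<and> (\<forall>z\<in>ball 0 1. norm (f z)^2 + norm (\<phi> z)^2 \<le> 1)"
proof -
  define m where "m = nat (zorder \<psi> 0)"
  define G where "G = zor_poly \<psi> 0"
  have z0: "(0::complex) \<in> ball 0 1" by simp
  have ze: "\<exists>r. r>0 \<and> cball (0::complex) r \<subseteq> ball 0 1 \<and> G holomorphic_on cball 0 r
    \<and> (\<forall>w\<in>cball 0 r. \<psi> w = G w * (w - 0) ^ m \<and> G w \<noteq> 0)"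
    using zorder_exist_zero[of \<psi> "ball 0 1" 0, OF hol open_ball connected_ball z0 nz]
    unfolding m_def G_def by blast
  then obtain r where r: "r > 0" "cball (0::complex) r \<subseteq> ball 0 1" "G holomorphic_on cball 0 r"
    and fac: "\<forall>w\<in>cball 0 r. \<psi> w = G w * (w - 0)^m \<and> G w \<noteq> 0"
    by blast
  define \<phi> where "\<phi> = (\<lambda>w. if w = 0 then G 0 else \<psi> w / w^m)"
  have eqG: "\<phi> w = G w" if "w \<in> ball 0 r" for w
    using fac that unfolding \<phi>_def by auto
  have a1: "\<phi> analytic_on ball 0 r"
  proof -
    have "G holomorphic_on ball 0 r" using r(3) by (rule holomorphic_on_subset) auto
    then have "\<phi> holomorphic_on ball 0 r" by (rule holomorphic_transform) (use eqG in auto)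
    then show ?thesis by (simp add: analytic_on_open)
  qed
  have a2: "\<phi> analytic_on (ball 0 1 - {0})"
  proof -
    have "(\<lambda>w. \<psi> w / w^m) holomorphic_on (ball 0 1 - {0})"
      using hol by (intro holomorphic_intros) (auto intro: holomorphic_on_subset)
    then have "\<phi> holomorphic_on (ball 0 1 - {0})"
      by (rule holomorphic_transform) (auto simp: \<phi>_def)
    then show ?thesis by (simp add: analytic_on_open open_Diff)
  qed
  have "ball (0::complex) r \<subseteq> ball 0 1" using r(2) by (meson ball_subset_cball order_trans)
  then have "ball (0::complex) 1 = ball 0 r \<union> (ball 0 1 - {0})" using r by auto
  then have "\<phi> analytic_on ball 0 1" using a1 a2 by (metis analytic_on_Un)
  then have h\<phi>: "\<phi> holomorphic_on ball 0 1" by (simp add: analytic_on_open)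
  have \<phi>0: "\<phi> 0 \<noteq> 0" unfolding \<phi>_def using fac r by auto
  have psi_eq: "\<psi> w = w^m * \<phi> w" if "w \<in> ball 0 1" for w
  proof (cases "w = 0")
    case True then show ?thesis using fac r unfolding \<phi>_def by auto
  next
    case False then show ?thesis unfolding \<phi>_def by simp
  qed
  have "norm (\<phi> z)^2 + norm (f z)^2 \<le> 1" if "z \<in> ball 0 1" for z
  proof (rule G_lemma[OF h\<phi> hf _ that])
    fix w :: complex assume "w \<in> ball 0 1"
    then have "norm (f w)^2 + norm (\<psi> w)^2 \<le> 1" using bd by blast
    then show "norm (w^m * \<phi> w)^2 + norm (f w)^2 \<le> 1" using psi_eq[OF \<open>w \<in> ball 0 1\<close>] by simp
  qed
  then show ?thesis using h\<phi> \<phi>0 by (auto simp: add.commute)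
qed

lemma UC_lim:
  fixes s :: "nat \<Rightarrow> complex \<Rightarrow> complex"
  assumes C: "\<And>e. e > 0 \<Longrightarrow> \<exists>N. \<forall>m n x. N \<le> m \<longrightarrow> m \<le> n \<longrightarrow> x \<in> S \<longrightarrow> norm (s n x - s m x) \<le> e"
  shows "uniform_limit S s (\<lambda>x. lim (\<lambda>n. s n x)) sequentially"
proof -
  have "uniformly_Cauchy_on S s"
    unfolding uniformly_Cauchy_on_def
  proof (intro allI impI)
    fix e :: real assume e: "e > 0"
    obtain N where N: "\<forall>m n x. N \<le> m \<longrightarrow> m \<le> n \<longrightarrow> x \<in> S \<longrightarrow> norm (s n x - s m x) \<le> e/2"
      using C[of "e/2"] e by auto
    show "\<exists>M. \<forall>x\<in>S. \<forall>m\<ge>M. \<forall>n\<ge>M. dist (s m x) (s n x) < e"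
    proof (intro exI ballI allI impI)
      fix x m n assume x: "x \<in> S" and m: "N \<le> m" and n: "N \<le> n"
      show "dist (s m x) (s n x) < e"
      proof (cases "m \<le> n")
        case True
        then have "norm (s n x - s m x) \<le> e/2" using N x m by blast
        then show ?thesis using e by (simp add: dist_norm norm_minus_commute)
      next
        case False
        then have "norm (s m x - s n x) \<le> e/2" using N x n by simp
        then show ?thesis using e by (simp add: dist_norm)
      qed
    qed
  qed
  then obtain l where l: "uniform_limit S s l sequentially"
    using Cauchy_uniformly_convergent unfolding uniformly_convergent_on_def by blast
  have ll: "lim (\<lambda>n. s n x) = l x" if "x \<in> S" for x
    using tendsto_uniform_limitI[OF l that] by (rule limI)
  have "uniform_limit S s (\<lambda>x. lim (\<lambda>n. s n x)) sequentially \<longleftrightarrow> uniform_limit S s l sequentially"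
    by (rule uniform_limit_cong) (auto simp: ll)
  then show ?thesis using l by simp
qed

lemma decay:
  fixes x :: "nat \<Rightarrow> complex \<Rightarrow> real" and e :: "nat \<Rightarrow> real"
  assumes r: "0 \<le> r" "r < 1" and M0: "0 \<le> M"
    and xb: "\<And>n z. z \<in> S \<Longrightarrow> 0 \<le> x n z \<and> x n z \<le> M"
    and rec: "\<And>n z. z \<in> S \<Longrightarrow> x (Suc n) z \<le> r * x n z + e n"
    and el: "e \<longlonglongrightarrow> 0"
  shows "\<And>\<epsilon>. \<epsilon> > 0 \<Longrightarrow> \<exists>N. \<forall>n\<ge>N. \<forall>z\<in>S. x n z \<le> \<epsilon>"
proof -
  fix \<epsilon> :: real assume ep: "\<epsilon> > 0"
  have "\<epsilon> * (1 - r) / 2 > 0" using ep r by simp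
  then obtain N1 where N1: "\<forall>n\<ge>N1. norm (e n - 0) < \<epsilon> * (1 - r) / 2"
    using el unfolding LIMSEQ_def dist_norm by blast
  have ind: "\<forall>z\<in>S. x (N1 + k) z \<le> r^k * M + \<epsilon> / 2" for k
  proof (induction k)
    case 0
    show ?case using xb ep by (auto intro: order_trans[of _ M])
  next
    case (Suc k)
    show ?case
    proof
      fix z assume z: "z \<in> S"
      have "\<bar>e (N1 + k)\<bar> < \<epsilon> * (1 - r) / 2" using N1[rule_format, of "N1 + k"] by simp
      then have "e (N1 + k) \<le> \<epsilon> * (1 - r) / 2" by (simp add: abs_less_iff)
      then have "x (N1 + Suc k) z \<le> r * x (N1 + k) z + \<epsilon> * (1 - r) / 2"
        using rec[OF z, of "N1 + k"] by simp
      also have "\<dots> \<le> r * (r^k * M + \<epsilon> / 2) + \<epsilon> * (1 - r) / 2"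
        using Suc z r by (intro add_right_mono mult_left_mono) auto
      also have "\<dots> = r^(Suc k) * M + \<epsilon> / 2" by (simp add: field_simps)
      finally show "x (N1 + Suc k) z \<le> r^(Suc k) * M + \<epsilon> / 2" .
    qed
  qed
  have "(\<lambda>k. r^k * M) \<longlonglongrightarrow> 0 * M"
    using r by (intro tendsto_intros LIMSEQ_power_zero) auto
  then obtain K where K: "\<forall>k\<ge>K. norm (r^k * M - 0) < \<epsilon> / 2"
    using ep unfolding LIMSEQ_def dist_norm by (metis mult_zero_left half_gt_zero)
  show "\<exists>N. \<forall>n\<ge>N. \<forall>z\<in>S. x n z \<le> \<epsilon>"
  proof (intro exI allI impI ballI)
    fix n z assume n: "N1 + K \<le> n" and z: "z \<in> S"
    define k where "k = n - N1"
    have nk: "n = N1 + k" and kK: "k \<ge> K" using n unfolding k_def by auto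
    have "r^k * M < \<epsilon> / 2" using K kK by force
    then show "x n z \<le> \<epsilon>" using ind[of k] z nk by force
  qed
qed

lemma J_cons:
  fixes x y g :: "nat \<Rightarrow> complex" and w :: complex
  assumes rx: "\<And>n. x (Suc n) = x n + g (Suc n) * w * y n"
    and ry: "\<And>n. y (Suc n) = cnj (g (Suc n)) * x n + w * y n"
    and g1: "\<And>n. norm (g n) < 1"
    and q0: "q0 > 0" and Qge: "\<And>n. q0 \<le> (\<Prod>k<n. 1 - norm (g (Suc k))^2)"
    and w: "norm w \<le> 1"
  shows "norm (y n)^2 + q0 * (1 - norm w^2) * (\<Sum>k<n. norm (y k)^2)
          \<le> norm (x n)^2 - (\<Prod>k<n. 1 - norm (g (Suc k))^2) * (norm (x 0)^2 - norm (y 0)^2)"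
proof -
  define Q where "Q = (\<lambda>n. \<Prod>k<n. 1 - norm (g (Suc k))^2)"
  have J: "norm (x n)^2 - norm (y n)^2 = Q n * ((norm (x 0)^2 - norm (y 0)^2) + (1 - norm w^2) * (\<Sum>k<n. norm (y k)^2 / Q k))"
    unfolding Q_def by (rule J_id[of x g w y, OF rx ry g1])
  have gk: "0 < 1 - norm (g k)^2 \<and> 1 - norm (g k)^2 \<le> 1" for k
    using g1[of k] by (simp add: power_less_one_iff abs_less_iff)
  have Qp: "0 < Q k" for k unfolding Q_def using gk by (intro prod_pos) auto
  have Q1: "Q k \<le> 1" for k unfolding Q_def using gk by (intro prod_le_1) (auto intro: less_imp_le)
  have w2: "0 \<le> 1 - norm w^2" using w by (simp add: power_le_one)
  have S: "(\<Sum>k<n. norm (y k)^2) \<le> (\<Sum>k<n. norm (y k)^2 / Q k)"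
  proof (rule sum_mono)
    fix k
    show "norm (y k)^2 \<le> norm (y k)^2 / Q k"
      using Qp[of k] Q1[of k] mult_right_le_one_le[of "norm (y k)^2" "Q k"] by (simp add: le_divide_eq)
  qed
  have "q0 * (1 - norm w^2) * (\<Sum>k<n. norm (y k)^2) \<le> Q n * ((1 - norm w^2) * (\<Sum>k<n. norm (y k)^2 / Q k))"
  proof -
    have "q0 * ((1 - norm w^2) * (\<Sum>k<n. norm (y k)^2)) \<le> Q n * ((1 - norm w^2) * (\<Sum>k<n. norm (y k)^2 / Q k))"
    proof (rule mult_mono)
      show "q0 \<le> Q n" using Qge[of n] unfolding Q_def .
      show "(1 - norm w^2) * (\<Sum>k<n. norm (y k)^2) \<le> (1 - norm w^2) * (\<Sum>k<n. norm (y k)^2 / Q k)"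
        using S w2 by (rule mult_left_mono)
      show "0 \<le> Q n" using Qp[of n] by simp
      show "0 \<le> (1 - norm w^2) * (\<Sum>k<n. norm (y k)^2)" using w2 by (simp add: sum_nonneg)
    qed
    then show ?thesis by (simp add: mult.assoc)
  qed
  moreover have "norm (x n)^2 - Q n * (norm (x 0)^2 - norm (y 0)^2) =
     norm (y n)^2 + Q n * ((1 - norm w^2) * (\<Sum>k<n. norm (y k)^2 / Q k))"
    using J by (simp add: algebra_simps)
  ultimately have "norm (y n)^2 + q0 * (1 - norm w^2) * (\<Sum>k<n. norm (y k)^2)
          \<le> norm (x n)^2 - Q n * (norm (x 0)^2 - norm (y 0)^2)" by linarith
  then show ?thesis unfolding Q_def .
qed

lemma poly_maxmod:
  fixes p :: "complex poly"
  assumes r: "r > 0" and bd: "\<And>w. norm w = r \<Longrightarrow> norm (poly p w) \<le> C" and z: "norm z \<le> r"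
  shows "norm (poly p z) \<le> C"
proof (rule maximum_modulus_frontier[of "poly p" "cball 0 r"])
  show "poly p holomorphic_on interior (cball 0 r)" by (intro holomorphic_intros)
  show "continuous_on (closure (cball 0 r)) (poly p)" by (intro continuous_intros)
  show "bounded (cball (0::complex) r)" by simp
  show "z \<in> cball 0 r" using z by simp
  fix w :: complex assume "w \<in> frontier (cball 0 r)"
  then show "norm (poly p w) \<le> C" using r bd by (simp add: frontier_cball)
qed

lemma circle_choice:
  fixes \<phi> :: "complex \<Rightarrow> complex"
  assumes hol: "\<phi> holomorphic_on ball 0 1" and \<phi>0: "\<phi> 0 \<noteq> 0" and r0: "0 \<le> r0" "r0 < 1"
  shows "\<exists>r \<mu>. r0 \<le> r \<and> r < 1 \<and> 0 < r \<and> 0 < \<mu> \<and> (\<forall>w. norm w = r \<longrightarrow> \<mu> \<le> norm (\<phi> w))"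
proof -
  define r1 where "r1 = max r0 (1/2)"
  define \<rho> where "\<rho> = (1 + r1) / 2"
  have r1: "r0 \<le> r1" "1/2 \<le> r1" "r1 < 1" using r0 unfolding r1_def by auto
  have \<rho>: "r1 < \<rho>" "\<rho> < 1" using r1 unfolding \<rho>_def by auto
  define Z where "Z = {z \<in> cball 0 \<rho>. \<phi> z = 0}"
  have finZ: "finite Z"
  proof (cases "\<phi> constant_on ball 0 1")
    case True
    then obtain c where c: "\<forall>z\<in>ball 0 1. \<phi> z = c" unfolding constant_on_def by auto
    then have "c \<noteq> 0" using \<phi>0 by (metis centre_in_ball zero_less_one)
    then have "Z = {}" unfolding Z_def using c \<rho> by auto
    then show ?thesis by simp
  next
    case False
    have "finite {z \<in> cball 0 \<rho>. \<phi> z = 0}"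
      by (rule holomorphic_compact_finite_zeros[OF hol open_ball connected_ball compact_cball _ False])
         (use \<rho> in auto)
    then show ?thesis unfolding Z_def .
  qed
  have "infinite ({r1<..<\<rho>} - norm ` Z)"
    using \<rho> finZ by (intro Diff_infinite_finite) (auto simp: infinite_Ioo)
  then obtain r where r: "r \<in> {r1<..<\<rho>}" "r \<notin> norm ` Z"
    by (metis Diff_iff finite.emptyI infinite_imp_nonempty ex_in_conv)
  have rr: "r0 \<le> r" "r < 1" "0 < r" using r r1 \<rho> by auto
  have cont: "continuous_on (sphere 0 r) (\<lambda>w. norm (\<phi> w))"
  proof -
    have "sphere 0 r \<subseteq> ball (0::complex) 1" using rr by auto
    then have "continuous_on (sphere 0 r) \<phi>"
      using hol by (meson holomorphic_on_imp_continuous_on holomorphic_on_subset)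
    then show ?thesis by (intro continuous_intros)
  qed
  have "sphere (0::complex) r \<noteq> {}" using rr by simp
  then obtain w0 where w0: "w0 \<in> sphere 0 r" and mn: "\<forall>w\<in>sphere 0 r. norm (\<phi> w0) \<le> norm (\<phi> w)"
    using continuous_attains_inf[OF compact_sphere _ cont] by blast
  have "\<phi> w0 \<noteq> 0"
  proof
    assume "\<phi> w0 = 0"
    then have "w0 \<in> Z" unfolding Z_def using w0 r by auto
    then have "r \<in> norm ` Z" using w0 by force
    then show False using r by simp
  qed
  then show ?thesis using rr mn by (intro exI[of _ r] exI[of _ "norm (\<phi> w0)"]) auto
qed

lemma cauchy_sq:
  fixes s d :: "nat \<Rightarrow> complex \<Rightarrow> complex" and c :: "nat \<Rightarrow> real" and u :: "nat \<Rightarrow> complex \<Rightarrow> real"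
  assumes rec: "\<And>k z. z \<in> S \<Longrightarrow> s (Suc k) z = s k z + d k z"
    and dle: "\<And>k z. z \<in> S \<Longrightarrow> norm (d k z) \<le> c k * u k z"
    and c0: "\<And>k. 0 \<le> c k" and u0: "\<And>k z. z \<in> S \<Longrightarrow> 0 \<le> u k z"
    and sc: "summable (\<lambda>k. c k ^ 2)"
    and M: "\<And>n z. z \<in> S \<Longrightarrow> (\<Sum>k<n. u k z ^ 2) \<le> M2"
  shows "\<And>e. e > 0 \<Longrightarrow> \<exists>N. \<forall>m n z. N \<le> m \<longrightarrow> m \<le> n \<longrightarrow> z \<in> S \<longrightarrow> norm (s n z - s m z) \<le> e"
proof -
  fix e :: real assume e: "e > 0"
  have M20: "M2 \<ge> 0" if "z \<in> S" for z using M[OF that, of 0] by simp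
  define \<epsilon> where "\<epsilon> = e / (\<bar>M2\<bar> + 1)"
  have ep: "\<epsilon> > 0" unfolding \<epsilon>_def using e by (simp add: add_pos_nonneg)
  have epM: "\<epsilon> * M2 \<le> e" if "z \<in> S" for z
  proof -
    have "\<epsilon> * M2 \<le> \<epsilon> * (\<bar>M2\<bar> + 1)" using ep by (intro mult_left_mono) auto
    also have "\<dots> = e" unfolding \<epsilon>_def by simp
    finally show ?thesis .
  qed
  obtain N where N: "\<forall>m\<ge>N. \<forall>n. norm (sum (\<lambda>k. c k ^ 2) {m..<n}) < e * \<epsilon>"
    using sc e ep unfolding summable_Cauchy by (meson mult_pos_pos)
  show "\<exists>N. \<forall>m n z. N \<le> m \<longrightarrow> m \<le> n \<longrightarrow> z \<in> S \<longrightarrow> norm (s n z - s m z) \<le> e"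
  proof (intro exI[of _ N] allI impI)
    fix m n z assume m: "N \<le> m" and mn: "m \<le> n" and z: "z \<in> S"
    have "s n z - s m z = (\<Sum>k = m..<n. s (Suc k) z - s k z)"
      using mn by (rule sum_Suc_diff'[symmetric])
    also have "\<dots> = (\<Sum>k = m..<n. d k z)" using rec[OF z] by simp
    finally have eq: "s n z - s m z = (\<Sum>k = m..<n. d k z)" .
    have "norm (s n z - s m z) \<le> (\<Sum>k = m..<n. norm (d k z))" unfolding eq by (rule norm_sum)
    also have "\<dots> \<le> (\<Sum>k = m..<n. c k ^ 2 / (2 * \<epsilon>) + \<epsilon> * u k z ^ 2 / 2)"
    proof (rule sum_mono)
      fix k
      have "0 \<le> (c k - \<epsilon> * u k z)^2" by simp
      then have "2 * \<epsilon> * (c k * u k z) \<le> c k ^ 2 + \<epsilon>^2 * u k z ^ 2"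
        by (simp add: power2_eq_square algebra_simps)
      then have "c k * u k z \<le> c k ^ 2 / (2 * \<epsilon>) + \<epsilon> * u k z ^ 2 / 2"
        using ep by (simp add: field_simps power2_eq_square)
      then show "norm (d k z) \<le> c k ^ 2 / (2 * \<epsilon>) + \<epsilon> * u k z ^ 2 / 2"
        using dle[OF z, of k] by linarith
    qed
    also have "\<dots> = (\<Sum>k = m..<n. c k ^ 2) / (2 * \<epsilon>) + \<epsilon> / 2 * (\<Sum>k = m..<n. u k z ^ 2)"
      by (simp add: sum.distrib sum_divide_distrib sum_distrib_left)
    also have "\<dots> \<le> e / 2 + e / 2"
    proof (rule add_mono)
      have "(\<Sum>k = m..<n. c k ^ 2) < e * \<epsilon>" using N m
        by (metis (no_types, lifting) abs_of_nonneg norm_ge_zero real_norm_def sum_nonneg zero_le_power2 order_refl)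
      then show "(\<Sum>k = m..<n. c k ^ 2) / (2 * \<epsilon>) \<le> e / 2"
        using ep by (simp add: field_simps)
      have "(\<Sum>k = m..<n. u k z ^ 2) \<le> (\<Sum>k<n. u k z ^ 2)"
        by (rule sum_mono2) auto
      also have "\<dots> \<le> M2" by (rule M[OF z])
      finally have "\<epsilon> / 2 * (\<Sum>k = m..<n. u k z ^ 2) \<le> \<epsilon> / 2 * M2"
        using ep by (intro mult_left_mono) auto
      also have "\<dots> \<le> e / 2" using epM[OF z] by simp
      finally show "\<epsilon> / 2 * (\<Sum>k = m..<n. u k z ^ 2) \<le> e / 2" .
    qed
    finally show "norm (s n z - s m z) \<le> e" by simp
  qed
qed

lemma ul_zero:
  fixes s :: "nat \<Rightarrow> complex \<Rightarrow> complex"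
  assumes "\<And>\<epsilon>. \<epsilon> > 0 \<Longrightarrow> \<exists>N. \<forall>n\<ge>N. \<forall>z\<in>S. norm (s n z) \<le> \<epsilon>"
  shows "uniform_limit S s (\<lambda>_. 0) sequentially"
  unfolding uniform_limit_sequentially_iff dist_norm
proof (intro allI impI)
  fix e :: real assume e: "e > 0"
  obtain N where N: "\<forall>n\<ge>N. \<forall>z\<in>S. norm (s n z) \<le> e/2" using assms[of "e/2"] e by auto
  show "\<exists>N. \<forall>n\<ge>N. \<forall>x\<in>S. norm (s n x - 0) < e"
    using N e by (intro exI[of _ N]) force
qed

theorem theorem10:
  fixes f :: "complex \<Rightarrow> complex"
  assumes "f \<in> schur_class"
    and "\<not> schur_extreme f"
  shows "\<exists>a b. a holomorphic_on ball 0 1 \<and> b holomorphic_on ball 0 1 \<and>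
     (\<forall>K. compact K \<and> K \<subseteq> ball 0 1 \<longrightarrow>
        uniform_limit K (\<lambda>n. poly (schur_A f n)) a sequentially \<and>
        uniform_limit K (\<lambda>n. poly (schur_B f n)) b sequentially) \<and>
     (\<forall>z\<in>ball 0 1. a z = b z * f z) \<and>
     (\<forall>K. compact K \<and> K \<subseteq> ball 0 1 \<longrightarrow>
        uniform_limit K (\<lambda>n. poly (poly_star n (schur_A f n))) (\<lambda>_. 0) sequentially \<and>
        uniform_limit K (\<lambda>n. poly (poly_star n (schur_B f n))) (\<lambda>_. 0) sequentially)"
proof -
  have hf: "f holomorphic_on ball 0 1" and lf: "\<forall>z\<in>ball 0 1. norm (f z) < 1"
    using assms(1) unfolding schur_class_def by auto
  obtain \<psi> where h\<psi>: "\<psi> holomorphic_on ball 0 1" and nz\<psi>: "\<exists>z\<in>ball 0 1. \<psi> z \<noteq> 0"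
    and b\<psi>: "\<forall>z\<in>ball 0 1. norm (f z)^2 + norm (\<psi> z)^2 \<le> 1"
    using nonext_psi[OF assms] by blast
  obtain \<phi> where h\<phi>: "\<phi> holomorphic_on ball 0 1" and \<phi>0: "\<phi> 0 \<noteq> 0"
    and b\<phi>: "\<forall>z\<in>ball 0 1. norm (f z)^2 + norm (\<phi> z)^2 \<le> 1"
    using factor_phi[OF hf h\<psi> nz\<psi> b\<psi>] by blast
  note inv = schur_inv[OF hf lf h\<phi> \<phi>0 b\<phi>]
  have invF: "schur_iter f k holomorphic_on ball 0 1 \<and> (\<forall>z\<in>ball 0 1. norm (schur_iter f k z) < 1)" for k
    using inv[of k] by blast
  define \<gamma> where "\<gamma> = schur_param f"
  have g1: "norm (\<gamma> k) < 1" for k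
    using invF[of k] unfolding \<gamma>_def schur_param_def by auto
  have gk: "0 \<le> 1 - norm (\<gamma> k)^2 \<and> 1 - norm (\<gamma> k)^2 \<le> 1" for k
    using g1[of k] by (simp add: power_le_one less_imp_le)
  define q0 where "q0 = norm (\<phi> 0)^2"
  have q0: "q0 > 0" using \<phi>0 by (simp add: q0_def)
  have Ppge: "q0 \<le> Pp f n" for n
  proof -
    have a: "norm (schur_iter f n 0)^2 + norm (\<phi> 0 * Ep f n 0)^2 / Pp f n \<le> 1" and P: "Pp f n > 0"
      using inv[of n] by auto
    have E0: "Ep f n 0 = 1" unfolding Ep_def by simp
    have "norm (\<phi> 0 * Ep f n 0)^2 / Pp f n \<le> 1" using a zero_le_power2[of "norm (schur_iter f n 0)"] by linarith
    then have "q0 / Pp f n \<le> 1" using E0 unfolding q0_def by simp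
    then show ?thesis using P by (simp add: divide_le_eq)
  qed
  have Pp1: "Pp f n \<le> 1" for n
    unfolding Pp_def using gk unfolding \<gamma>_def by (intro prod_le_1) auto
  define Q where "Q = (\<lambda>n. \<Prod>k<n. 1 - norm (\<gamma> (Suc k))^2)"
  have Q01: "0 \<le> Q n \<and> Q n \<le> 1" for n
    unfolding Q_def using gk by (auto intro: prod_le_1 prod_nonneg)
  have Qge: "q0 \<le> Q n" for n
  proof -
    have "Pp f (Suc n) = (1 - norm (\<gamma> 0)^2) * Q n"
      unfolding Pp_def Q_def \<gamma>_def by (simp only: prod.lessThan_Suc_shift)
    also have "\<dots> \<le> Q n" using gk[of 0] Q01[of n] by (simp add: mult_left_le_one_le)
    finally show ?thesis using Ppge[of "Suc n"] by simp
  qed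
  have sumb: "(\<Sum>k<n. norm (\<gamma> k)^2) \<le> - ln q0" for n
  proof -
    have "Pp f n \<le> (\<Prod>k<n. exp (- (norm (\<gamma> k)^2)))"
      unfolding Pp_def \<gamma>_def[symmetric]
    proof (rule prod_mono)
      fix k
      show "0 \<le> 1 - norm (\<gamma> k)^2 \<and> 1 - norm (\<gamma> k)^2 \<le> exp (- (norm (\<gamma> k)^2))"
        using gk[of k] exp_ge_add_one_self[of "- (norm (\<gamma> k)^2)"] by simp
    qed
    also have "\<dots> = exp (- (\<Sum>k<n. norm (\<gamma> k)^2))" by (simp add: exp_sum[symmetric] sum_negf)
    finally have "q0 \<le> exp (- (\<Sum>k<n. norm (\<gamma> k)^2))" using Ppge[of n] by simp
    then have "ln q0 \<le> ln (exp (- (\<Sum>k<n. norm (\<gamma> k)^2)))" using q0 by (subst ln_le_cancel_iff) auto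
    then have "ln q0 \<le> - (\<Sum>k<n. norm (\<gamma> k)^2)" by simp
    then show ?thesis by simp
  qed
  have summ: "summable (\<lambda>k. norm (\<gamma> k)^2)"
    by (rule summableI_nonneg_bounded[of _ "- ln q0"]) (auto simp: sumb)
  have summ1: "summable (\<lambda>k. norm (\<gamma> (Suc k))^2)" using summable_Suc_iff[of "\<lambda>k. norm (\<gamma> k)^2"] summ by simp
  have glim: "(\<lambda>n. norm (\<gamma> (Suc n))) \<longlonglongrightarrow> 0"
  proof -
    have "(\<lambda>n. norm (\<gamma> (Suc n))^2) \<longlonglongrightarrow> 0" by (rule summable_LIMSEQ_zero[OF summ1])
    then have "(\<lambda>n. sqrt (norm (\<gamma> (Suc n))^2)) \<longlonglongrightarrow> sqrt 0" by (rule tendsto_real_sqrt)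
    then show ?thesis by simp
  qed
  define A where "A = (\<lambda>n. poly (schur_A f n))"
  define B where "B = (\<lambda>n. poly (schur_B f n))"
  define A' where "A' = (\<lambda>n. poly (poly_star n (schur_A f n)))"
  define B' where "B' = (\<lambda>n. poly (poly_star n (schur_B f n)))"
  have rB: "B (Suc n) z = B n z + \<gamma> (Suc n) * z * A' n z" for n z
    unfolding A_def B_def A'_def B'_def \<gamma>_def by (rule eval_rec)
  have rA': "A' (Suc n) z = cnj (\<gamma> (Suc n)) * B n z + z * A' n z" for n z
    unfolding A_def B_def A'_def B'_def \<gamma>_def by (rule eval_rec)
  have rA: "A (Suc n) z = A n z + \<gamma> (Suc n) * z * B' n z" for n z
    unfolding A_def B_def A'_def B'_def \<gamma>_def by (rule eval_rec)
  have rB': "B' (Suc n) z = cnj (\<gamma> (Suc n)) * A n z + z * B' n z" for n z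
    unfolding A_def B_def A'_def B'_def \<gamma>_def by (rule eval_rec)
  have i0: "A 0 z = \<gamma> 0" "B 0 z = 1" "A' 0 z = cnj (\<gamma> 0)" "B' 0 z = 1" for z
    unfolding A_def B_def A'_def B'_def \<gamma>_def by (rule eval_0)+
  have PA: "norm (A' n z)^2 + q0 * (1 - norm z^2) * (\<Sum>k<n. norm (A' k z)^2) \<le> norm (B n z)^2"
    if z: "norm z \<le> 1" for n z
  proof -
    have "norm (A' n z)^2 + q0 * (1 - norm z^2) * (\<Sum>k<n. norm (A' k z)^2)
        \<le> norm (B n z)^2 - Q n * (norm (B 0 z)^2 - norm (A' 0 z)^2)"
      unfolding Q_def by (rule J_cons[of "\<lambda>n. B n z" \<gamma> z "\<lambda>n. A' n z", OF rB rA' g1 q0 Qge[unfolded Q_def] z])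
    also have "\<dots> \<le> norm (B n z)^2" using Q01[of n] gk[of 0] by (simp add: i0)
    finally show ?thesis .
  qed
  have PB: "norm (B' n z)^2 + q0 * (1 - norm z^2) * (\<Sum>k<n. norm (B' k z)^2) \<le> norm (A n z)^2 + 1"
    if z: "norm z \<le> 1" for n z
  proof -
    have "norm (B' n z)^2 + q0 * (1 - norm z^2) * (\<Sum>k<n. norm (B' k z)^2)
        \<le> norm (A n z)^2 - Q n * (norm (A 0 z)^2 - norm (B' 0 z)^2)"
      unfolding Q_def by (rule J_cons[of "\<lambda>n. A n z" \<gamma> z "\<lambda>n. B' n z", OF rA rB' g1 q0 Qge[unfolded Q_def] z])
    also have "\<dots> = norm (A n z)^2 + Q n * (1 - norm (\<gamma> 0)^2)" by (simp add: i0 algebra_simps)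
    also have "\<dots> \<le> norm (A n z)^2 + 1" using Q01[of n] gk[of 0] by (simp add: mult_le_one)
    finally show ?thesis .
  qed
  have DN: "B n z + z * A' n z * schur_iter f (Suc n) z = Ep f (Suc n) z"
           "A n z + z * B' n z * schur_iter f (Suc n) z = f z * Ep f (Suc n) z"
    if z: "z \<in> ball 0 1" for n z
    using schur_DN[OF invF z, of n] unfolding A_def B_def A'_def B'_def by auto
  have Eb: "norm (\<phi> z * Ep f (Suc n) z) \<le> 1" if z: "z \<in> ball 0 1" for n z
  proof -
    have a: "norm (schur_iter f (Suc n) z)^2 + norm (\<phi> z * Ep f (Suc n) z)^2 / Pp f (Suc n) \<le> 1"
      and P: "Pp f (Suc n) > 0" using inv[of "Suc n"] z by auto
    have "norm (\<phi> z * Ep f (Suc n) z)^2 / Pp f (Suc n) \<le> 1"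
      using a zero_le_power2[of "norm (schur_iter f (Suc n) z)"] by linarith
    then have "norm (\<phi> z * Ep f (Suc n) z)^2 \<le> Pp f (Suc n)" using P by (simp add: divide_le_eq)
    also have "\<dots> \<le> 1" by (rule Pp1)
    finally show ?thesis by (simp add: power_le_one_iff)
  qed
  have Fb: "norm (schur_iter f k z) \<le> 1" if "z \<in> ball 0 1" for k z
    using invF[of k] that by (auto intro: less_imp_le)
  have ABs: "norm (A' n w) \<le> norm (B n w)" if w: "norm w \<le> 1" for n w
  proof -
    have "0 \<le> q0 * (1 - norm w^2) * (\<Sum>k<n. norm (A' k w)^2)"
      using q0 w by (intro mult_nonneg_nonneg sum_nonneg) (auto simp: power_le_one)
    then have "norm (A' n w)^2 \<le> norm (B n w)^2" using PA[OF w, of n] by linarith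
    then show ?thesis by (rule power2_le_imp_le) simp
  qed
  have BAs: "norm (B' n w) \<le> norm (A n w) + 1" if w: "norm w \<le> 1" for n w
  proof -
    have "0 \<le> q0 * (1 - norm w^2) * (\<Sum>k<n. norm (B' k w)^2)"
      using q0 w by (intro mult_nonneg_nonneg sum_nonneg) (auto simp: power_le_one)
    then have "norm (B' n w)^2 \<le> norm (A n w)^2 + 1" using PB[OF w, of n] by linarith
    also have "\<dots> \<le> (norm (A n w) + 1)^2" by (simp add: power2_sum)
    finally show ?thesis by (rule power2_le_imp_le) simp
  qed
  have bounds: "\<exists>r C. r0 \<le> r \<and> r < 1 \<and> 0 < r \<and> 0 \<le> C \<and> (\<forall>n z. norm z \<le> r \<longrightarrow> norm (B n z) \<le> C \<and> norm (A n z) \<le> C)"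
    if r0: "0 \<le> r0" "r0 < 1" for r0
  proof -
    obtain r \<mu> where r: "r0 \<le> r" "r < 1" "0 < r" and \<mu>: "0 < \<mu>"
      and \<phi>\<mu>: "\<forall>w. norm w = r \<longrightarrow> \<mu> \<le> norm (\<phi> w)"
      using circle_choice[OF h\<phi> \<phi>0 r0] by blast
    define C where "C = (1/\<mu> + 1) / (1 - r)"
    have C0: "0 \<le> C" using \<mu> r by (simp add: C_def)
    have onc: "norm (B n w) \<le> C \<and> norm (A n w) \<le> C" if w: "norm w = r" for n w
    proof -
      have wD: "w \<in> ball 0 1" using w r by simp
      have w1: "norm w \<le> 1" using w r by simp
      define E where "E = Ep f (Suc n) w"
      define Fw where "Fw = schur_iter f (Suc n) w"
      have E: "norm E \<le> 1/\<mu>"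
      proof -
        have "\<mu> * norm E \<le> norm (\<phi> w) * norm E" using \<phi>\<mu> w by (intro mult_right_mono) auto
        also have "\<dots> \<le> 1" using Eb[OF wD, of n] unfolding E_def by (simp add: norm_mult)
        finally show ?thesis using \<mu> by (simp add: field_simps)
      qed
      have Fw: "norm Fw \<le> 1" unfolding Fw_def by (rule Fb[OF wD])
      have fw: "norm (f w) \<le> 1" using lf wD by (auto intro: less_imp_le)
      have "B n w = E - w * A' n w * Fw" using DN(1)[OF wD, of n] unfolding E_def Fw_def by (simp add: algebra_simps)
      then have "norm (B n w) \<le> norm E + norm (w * A' n w * Fw)" by (simp add: norm_triangle_ineq4)
      also have "norm (w * A' n w * Fw) = r * (norm (A' n w) * norm Fw)" using w by (simp add: norm_mult)
      also have "\<dots> \<le> r * norm (B n w)"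
        using ABs[OF w1, of n] Fw r by (intro mult_left_mono) (auto intro: mult_le_one order_trans[OF mult_right_le_one_le])
      finally have "norm (B n w) \<le> 1/\<mu> + r * norm (B n w)" using E by linarith
      then have "norm (B n w) * (1 - r) \<le> 1/\<mu>" by (simp add: algebra_simps)
      moreover have r1: "0 < 1 - r" using r by simp
      ultimately have "norm (B n w) \<le> (1/\<mu>) / (1 - r)" by (simp only: pos_le_divide_eq)
      also have "\<dots> \<le> C" unfolding C_def using r \<mu> by (intro divide_right_mono) auto
      finally have bB: "norm (B n w) \<le> C" .
      have "A n w = f w * E - w * B' n w * Fw" using DN(2)[OF wD, of n] unfolding E_def Fw_def by (simp add: algebra_simps)
      then have "norm (A n w) \<le> norm (f w * E) + norm (w * B' n w * Fw)" by (simp add: norm_triangle_ineq4)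
      also have "norm (f w * E) \<le> 1/\<mu>"
        using fw E \<mu> by (simp add: norm_mult) (metis mult_le_one mult_left_le_one_le norm_ge_zero order_trans mult.commute mult_mono zero_le_one divide_nonneg_nonneg less_imp_le)
      also have "norm (w * B' n w * Fw) = r * (norm (B' n w) * norm Fw)" using w by (simp add: norm_mult)
      also have "\<dots> \<le> r * (norm (A n w) + 1)"
      proof -
        have "norm (B' n w) * norm Fw \<le> norm (B' n w)" using Fw by (intro mult_right_le_one_le) auto
        also have "\<dots> \<le> norm (A n w) + 1" by (rule BAs[OF w1])
        finally show ?thesis using r by (intro mult_left_mono) auto
      qed
      finally have "norm (A n w) \<le> 1/\<mu> + r * (norm (A n w) + 1)" by simp
      then have "norm (A n w) * (1 - r) \<le> 1/\<mu> + 1" using r by (simp add: algebra_simps)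
      then have bA: "norm (A n w) \<le> C" unfolding C_def using r1 by (simp only: pos_le_divide_eq)
      show ?thesis using bA bB by simp
    qed
    have "norm (B n z) \<le> C \<and> norm (A n z) \<le> C" if z: "norm z \<le> r" for n z
    proof
      show "norm (B n z) \<le> C" unfolding B_def
        by (rule poly_maxmod[OF r(3) _ z]) (use onc in \<open>auto simp: B_def\<close>)
      show "norm (A n z) \<le> C" unfolding A_def
        by (rule poly_maxmod[OF r(3) _ z]) (use onc in \<open>auto simp: A_def\<close>)
    qed
    then show ?thesis using r C0 by blast
  qed
  have loc: "\<exists>r. r0 \<le> r \<and> r < 1 \<and>
      uniform_limit (cball 0 r) B (\<lambda>z. lim (\<lambda>n. B n z)) sequentially \<and>
      uniform_limit (cball 0 r) A (\<lambda>z. lim (\<lambda>n. A n z)) sequentially \<and>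
      uniform_limit (cball 0 r) A' (\<lambda>_. 0) sequentially \<and>
      uniform_limit (cball 0 r) B' (\<lambda>_. 0) sequentially"
    if r0: "0 \<le> r0" "r0 < 1" for r0
  proof -
    obtain r C where r: "r0 \<le> r" "r < 1" "0 < r" and C0: "0 \<le> C"
      and bd: "\<And>n z. norm z \<le> r \<Longrightarrow> norm (B n z) \<le> C \<and> norm (A n z) \<le> C"
      using bounds[OF r0] by blast
    define S where "S = cball (0::complex) r"
    have zS: "norm z \<le> r" "norm z \<le> 1" if "z \<in> S" for z using that r unfolding S_def by auto
    define M2 where "M2 = (C^2 + 1) / (q0 * (1 - r^2))"
    have "r^2 < 1" using r by (simp add: power_less_one_iff abs_less_iff)
    then have qr: "0 < q0 * (1 - r^2)" using q0 by simp
    have bA': "norm (A' n z) \<le> C" if z: "z \<in> S" for n z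
      using ABs[OF zS(2)[OF z], of n] bd[OF zS(1)[OF z], of n] by linarith
    have bB': "norm (B' n z) \<le> C + 1" if z: "z \<in> S" for n z
      using BAs[OF zS(2)[OF z], of n] bd[OF zS(1)[OF z], of n] by linarith
    have sq: "x \<le> M2" if "q0 * (1 - norm z^2) * x \<le> C^2 + 1" "0 \<le> x" "z \<in> S" for x z
    proof -
      have "norm z^2 \<le> r^2" using zS(1)[OF that(3)] by (simp add: power_mono)
      then have "q0 * (1 - r^2) * x \<le> q0 * (1 - norm z^2) * x"
        using q0 that(2) by (intro mult_right_mono mult_left_mono) auto
      then have "q0 * (1 - r^2) * x \<le> C^2 + 1" using that(1) by linarith
      then show ?thesis unfolding M2_def using qr by (simp add: pos_le_divide_eq mult.commute)
    qed
    have sA: "(\<Sum>k<n. norm (A' k z)^2) \<le> M2" if z: "z \<in> S" for n z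
    proof (rule sq[OF _ _ z])
      have "norm (B n z)^2 \<le> C^2" using bd[OF zS(1)[OF z], of n] by (simp add: power_mono)
      then show "q0 * (1 - norm z^2) * (\<Sum>k<n. norm (A' k z)^2) \<le> C^2 + 1"
        using PA[OF zS(2)[OF z], of n] zero_le_power2[of "norm (A' n z)"] by linarith
    qed (simp add: sum_nonneg)
    have sB: "(\<Sum>k<n. norm (B' k z)^2) \<le> M2" if z: "z \<in> S" for n z
    proof (rule sq[OF _ _ z])
      have "norm (A n z)^2 \<le> C^2" using bd[OF zS(1)[OF z], of n] by (simp add: power_mono)
      then show "q0 * (1 - norm z^2) * (\<Sum>k<n. norm (B' k z)^2) \<le> C^2 + 1"
        using PB[OF zS(2)[OF z], of n] zero_le_power2[of "norm (B' n z)"] by linarith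
    qed (simp add: sum_nonneg)
    have uB: "uniform_limit S B (\<lambda>z. lim (\<lambda>n. B n z)) sequentially"
    proof (rule UC_lim)
      fix e :: real assume e: "e > 0"
      show "\<exists>N. \<forall>m n x. N \<le> m \<longrightarrow> m \<le> n \<longrightarrow> x \<in> S \<longrightarrow> norm (B n x - B m x) \<le> e"
      proof (rule cauchy_sq[where d = "\<lambda>k z. \<gamma> (Suc k) * z * A' k z" and c = "\<lambda>k. norm (\<gamma> (Suc k))"
            and u = "\<lambda>k z. norm (A' k z)" , OF rB _ _ _ summ1 sA e])
        fix k z assume z: "z \<in> S"
        have "norm (\<gamma> (Suc k) * z * A' k z) = norm (\<gamma> (Suc k)) * (norm z * norm (A' k z))"
          by (simp add: norm_mult)
        also have "\<dots> \<le> norm (\<gamma> (Suc k)) * norm (A' k z)"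
          using zS(2)[OF z] by (intro mult_left_mono) (auto intro: mult_left_le_one_le)
        finally show "norm (\<gamma> (Suc k) * z * A' k z) \<le> norm (\<gamma> (Suc k)) * norm (A' k z)" .
      qed auto
    qed
    have uA: "uniform_limit S A (\<lambda>z. lim (\<lambda>n. A n z)) sequentially"
    proof (rule UC_lim)
      fix e :: real assume e: "e > 0"
      show "\<exists>N. \<forall>m n x. N \<le> m \<longrightarrow> m \<le> n \<longrightarrow> x \<in> S \<longrightarrow> norm (A n x - A m x) \<le> e"
      proof (rule cauchy_sq[where d = "\<lambda>k z. \<gamma> (Suc k) * z * B' k z" and c = "\<lambda>k. norm (\<gamma> (Suc k))"
            and u = "\<lambda>k z. norm (B' k z)" , OF rA _ _ _ summ1 sB e])
        fix k z assume z: "z \<in> S"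
        have "norm (\<gamma> (Suc k) * z * B' k z) = norm (\<gamma> (Suc k)) * (norm z * norm (B' k z))"
          by (simp add: norm_mult)
        also have "\<dots> \<le> norm (\<gamma> (Suc k)) * norm (B' k z)"
          using zS(2)[OF z] by (intro mult_left_mono) (auto intro: mult_left_le_one_le)
        finally show "norm (\<gamma> (Suc k) * z * B' k z) \<le> norm (\<gamma> (Suc k)) * norm (B' k z)" .
      qed auto
    qed
    have el: "(\<lambda>n. C * norm (\<gamma> (Suc n))) \<longlonglongrightarrow> 0"
      using tendsto_mult[OF tendsto_const[of C] glim] by simp
    have uA': "uniform_limit S A' (\<lambda>_. 0) sequentially"
    proof (rule ul_zero)
      fix \<epsilon> :: real assume ep: "\<epsilon> > 0"
      show "\<exists>N. \<forall>n\<ge>N. \<forall>z\<in>S. norm (A' n z) \<le> \<epsilon>"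
      proof (rule decay[where x = "\<lambda>n z. norm (A' n z)" and r = r and M = "C + 1"
            and e = "\<lambda>n. C * norm (\<gamma> (Suc n))", OF _ _ _ _ _ el ep])
        show "0 \<le> r" "r < 1" "0 \<le> C + 1" using r C0 by auto
        fix n z assume z: "z \<in> S"
        show "0 \<le> norm (A' n z) \<and> norm (A' n z) \<le> C + 1" using bA'[OF z, of n] by simp
        have "norm (A' (Suc n) z) \<le> norm (cnj (\<gamma> (Suc n)) * B n z) + norm (z * A' n z)"
          unfolding rA' by (rule norm_triangle_ineq)
        also have "norm (cnj (\<gamma> (Suc n)) * B n z) \<le> C * norm (\<gamma> (Suc n))"
          using bd[OF zS(1)[OF z], of n] by (simp add: norm_mult mult.commute[of "norm (\<gamma> (Suc n))"] mult_right_mono)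
        also have "norm (z * A' n z) \<le> r * norm (A' n z)"
          using zS(1)[OF z] by (simp add: norm_mult mult_right_mono)
        finally show "norm (A' (Suc n) z) \<le> r * norm (A' n z) + C * norm (\<gamma> (Suc n))" by simp
      qed
    qed
    have uB': "uniform_limit S B' (\<lambda>_. 0) sequentially"
    proof (rule ul_zero)
      fix \<epsilon> :: real assume ep: "\<epsilon> > 0"
      show "\<exists>N. \<forall>n\<ge>N. \<forall>z\<in>S. norm (B' n z) \<le> \<epsilon>"
      proof (rule decay[where x = "\<lambda>n z. norm (B' n z)" and r = r and M = "C + 1"
            and e = "\<lambda>n. C * norm (\<gamma> (Suc n))", OF _ _ _ _ _ el ep])
        show "0 \<le> r" "r < 1" "0 \<le> C + 1" using r C0 by auto
        fix n z assume z: "z \<in> S"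
        show "0 \<le> norm (B' n z) \<and> norm (B' n z) \<le> C + 1" using bB'[OF z, of n] by simp
        have "norm (B' (Suc n) z) \<le> norm (cnj (\<gamma> (Suc n)) * A n z) + norm (z * B' n z)"
          unfolding rB' by (rule norm_triangle_ineq)
        also have "norm (cnj (\<gamma> (Suc n)) * A n z) \<le> C * norm (\<gamma> (Suc n))"
          using bd[OF zS(1)[OF z], of n] by (simp add: norm_mult mult.commute[of "norm (\<gamma> (Suc n))"] mult_right_mono)
        also have "norm (z * B' n z) \<le> r * norm (B' n z)"
          using zS(1)[OF z] by (simp add: norm_mult mult_right_mono)
        finally show "norm (B' (Suc n) z) \<le> r * norm (B' n z) + C * norm (\<gamma> (Suc n))" by simp
      qed
    qed
    show ?thesis using r uA uB uA' uB' unfolding S_def by blast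
  qed
  define aL where "aL = (\<lambda>z. lim (\<lambda>n. A n z))"
  define bL where "bL = (\<lambda>z. lim (\<lambda>n. B n z))"
  have ul: "uniform_limit K A aL sequentially \<and> uniform_limit K B bL sequentially \<and>
            uniform_limit K A' (\<lambda>_. 0) sequentially \<and> uniform_limit K B' (\<lambda>_. 0) sequentially"
    if K: "compact K" "K \<subseteq> ball 0 1" for K
  proof -
    obtain r0 where r0: "0 \<le> r0" "r0 < 1" and Kr0: "K \<subseteq> cball 0 r0"
    proof (cases "K = {}")
      case True
      then show ?thesis using that[of 0] by simp
    next
      case False
      have "continuous_on K norm" by (intro continuous_intros)
      then obtain x where x: "x \<in> K" and mx: "\<forall>y\<in>K. norm y \<le> norm x"
        using continuous_attains_sup[OF K(1) False] by blast
      have "norm x < 1" using x K(2) by auto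
      moreover have "K \<subseteq> cball 0 (norm x)" using mx by auto
      ultimately show ?thesis using that[of "norm x"] by simp
    qed
    obtain r where r: "r0 \<le> r" "r < 1"
      and u: "uniform_limit (cball 0 r) B bL sequentially" "uniform_limit (cball 0 r) A aL sequentially"
             "uniform_limit (cball 0 r) A' (\<lambda>_. 0) sequentially" "uniform_limit (cball 0 r) B' (\<lambda>_. 0) sequentially"
      using loc[OF r0] unfolding aL_def bL_def by blast
    have sub: "K \<subseteq> cball 0 r" using Kr0 r by (auto simp: subset_iff)
    show ?thesis using u uniform_limit_on_subset[OF _ sub] by blast
  qed
  have hol: "aL holomorphic_on ball 0 1 \<and> bL holomorphic_on ball 0 1"
  proof -
    have loc2: "\<exists>d. 0 < d \<and> cball x d \<subseteq> ball 0 1 \<and> uniform_limit (cball x d) A aL sequentially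
                  \<and> uniform_limit (cball x d) B bL sequentially" if x: "x \<in> ball 0 1" for x
    proof -
      define d where "d = (1 - norm x) / 2"
      have d: "0 < d" using x unfolding d_def by simp
      have sub: "cball x d \<subseteq> ball 0 1"
      proof
        fix y assume "y \<in> cball x d"
        then have y1: "norm y \<le> norm x + d" using norm_triangle_sub[of y x] by (simp add: dist_norm norm_minus_commute)
        have "norm x < 1" using x by simp
        have "norm x + d < 1" unfolding d_def using \<open>norm x < 1\<close> by (simp add: field_simps)
        then have "norm y < 1" using y1 by (rule le_less_trans[rotated])
        then show "y \<in> ball 0 1" by simp
      qed
      have "uniform_limit (cball x d) A aL sequentially \<and> uniform_limit (cball x d) B bL sequentially"
        using ul[OF compact_cball sub] by blast
      then show ?thesis using d sub by blast
    qed
    have "aL holomorphic_on ball 0 1"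
      by (rule holomorphic_uniform_sequence[OF open_ball, of A]) (use loc2 in \<open>auto simp: A_def intro!: holomorphic_intros\<close>)
    moreover have "bL holomorphic_on ball 0 1"
      by (rule holomorphic_uniform_sequence[OF open_ball, of B]) (use loc2 in \<open>auto simp: B_def intro!: holomorphic_intros\<close>)
    ultimately show ?thesis ..
  qed
  have eq: "aL z = bL z * f z" if z: "z \<in> ball 0 1" for z
  proof -
    have zK: "compact {z}" "{z} \<subseteq> ball 0 1" using z by auto
    note u = ul[OF zK]
    have tA: "(\<lambda>n. A n z) \<longlonglongrightarrow> aL z" using tendsto_uniform_limitI[OF conjunct1[OF u]] by simp
    have tB: "(\<lambda>n. B n z) \<longlonglongrightarrow> bL z" using tendsto_uniform_limitI[OF conjunct1[OF conjunct2[OF u]]] by simp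
    have tA': "(\<lambda>n. A' n z) \<longlonglongrightarrow> 0"
      using tendsto_uniform_limitI[OF conjunct1[OF conjunct2[OF conjunct2[OF u]]]] by simp
    have tB': "(\<lambda>n. B' n z) \<longlonglongrightarrow> 0"
      using tendsto_uniform_limitI[OF conjunct2[OF conjunct2[OF conjunct2[OF u]]]] by simp
    have fz: "norm (f z) \<le> 1" using lf z by (auto intro: less_imp_le)
    have z1: "norm z \<le> 1" using z by simp
    have diff: "A n z - f z * B n z = z * schur_iter f (Suc n) z * (f z * A' n z - B' n z)" for n
    proof -
      have "A n z = f z * Ep f (Suc n) z - z * B' n z * schur_iter f (Suc n) z"
        using DN(2)[OF z, of n] by (simp add: algebra_simps)
      also have "Ep f (Suc n) z = B n z + z * A' n z * schur_iter f (Suc n) z"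
        using DN(1)[OF z, of n] by simp
      finally show ?thesis by (simp add: algebra_simps)
    qed
    have t0: "(\<lambda>n. norm (f z * A' n z) + norm (B' n z)) \<longlonglongrightarrow> 0"
      using tendsto_add[OF tendsto_norm[OF tendsto_mult[OF tendsto_const[of "f z"] tA']] tendsto_norm[OF tB']]
      by simp
    have "(\<lambda>n. A n z - f z * B n z) \<longlonglongrightarrow> 0"
    proof (rule Lim_null_comparison[OF _ t0], rule always_eventually, rule allI)
      fix n
      have Fz: "norm (schur_iter f (Suc n) z) \<le> 1" by (rule Fb[OF z])
      have "norm (A n z - f z * B n z) = norm z * norm (schur_iter f (Suc n) z) * norm (f z * A' n z - B' n z)"
        unfolding diff by (simp add: norm_mult)
      also have "\<dots> \<le> norm (f z * A' n z - B' n z)"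
        using z1 Fz by (simp add: mult_le_one mult_left_le_one_le)
      also have "\<dots> \<le> norm (f z * A' n z) + norm (B' n z)" by (rule norm_triangle_ineq4)
      finally show "norm (A n z - f z * B n z) \<le> norm (f z * A' n z) + norm (B' n z)" .
    qed
    then have "(\<lambda>n. (A n z - f z * B n z) + f z * B n z) \<longlonglongrightarrow> 0 + f z * bL z"
      by (intro tendsto_add tendsto_mult tendsto_const tB)
    then have "(\<lambda>n. A n z) \<longlonglongrightarrow> f z * bL z" by simp
    then have "aL z = f z * bL z" using tA by (rule LIMSEQ_unique[rotated])
    then show ?thesis by (simp add: mult.commute)
  qed
  have G1: "\<forall>K. compact K \<and> K \<subseteq> ball 0 1 \<longrightarrow>
        uniform_limit K (\<lambda>n. poly (schur_A f n)) aL sequentially \<and>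
        uniform_limit K (\<lambda>n. poly (schur_B f n)) bL sequentially"
    using ul unfolding A_def B_def by blast
  have G2: "\<forall>K. compact K \<and> K \<subseteq> ball 0 1 \<longrightarrow>
        uniform_limit K (\<lambda>n. poly (poly_star n (schur_A f n))) (\<lambda>_. 0) sequentially \<and>
        uniform_limit K (\<lambda>n. poly (poly_star n (schur_B f n))) (\<lambda>_. 0) sequentially"
    using ul unfolding A'_def B'_def by blast
  have G3: "\<forall>z\<in>ball 0 1. aL z = bL z * f z" using eq by blast
  show ?thesis
    by (rule exI[of _ aL], rule exI[of _ bL]) (use hol G1 G2 G3 in blast)
qed

end
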